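(* Let $\mathbb P$ be an LTF. Then $\mathbb P\times_{E_0}\mathbb P$ forces that $x_{\mathrm{left}}$ and $x_{\mathrm{right}}$ are not $E_0$-equivalent, where $\langle x_{\mathrm{left}},x_{\mathrm{right}}\rangle$ is the generic pair of reals, i.e. the unique pair with $\langle x_{\mathrm{left}},x_{\mathrm{right}}\rangle\in[T]\times[T']$ for all $\langle T,T'\rangle$ in the generic filter.
   Context: Notation. $2^{<\omega}$ is the set of finite binary strings, $\mathrm{lh}(s)$ the length of $s$, $s\subseteq t$ means $t$ extends $s$. For $s\in 2^{<\omega}$ and $x\in 2^\omega$, $s\cdot x\in 2^\omega$ is given by $(s\cdot x)(k)=x(k)+s(k)\bmod 2$ for $k<\mathrm{lh}(s)$ and $(s\cdot x)(k)=x(k)$ otherwise. For strings $s,t$ with $\mathrm{lh}(s)\le\mathrm{lh}(t)$, $s\cdot t$ is the string of length $\mathrm{lh}(t)$ with $(s\cdot t)(k)=t(k)+s(k)\bmod 2$ for $k<\mathrm{lh}(s)$ and $(s\cdot t)(k)=t(k)$ otherwise; if $\mathrm{lh}(s)>\mathrm{lh}(t)$ then $s\cdot t=(s\restriction\mathrm{lh}(t))\cdot t$. For $T\subseteq 2^{<\omega}$, $s\cdot T=\{s\cdot t:t\in T\}$. For a tree $T$ and $s\in T$, $T\upharpoonright s=\{t\in T:s\subseteq t\lor t\subseteq s\}$. A perfect tree is a nonempty tree $T\subseteq 2^{<\omega}$ with no endpoints and no isolated branches; its stem $\mathrm{stem}(T)$ is the largest $s\in T$ with $T=T\upharpoonright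 s$; $[T]=\{a\in 2^\omega:\forall m\,(a\restriction m\in T)\}$. A perfect tree $T$ is large, written $T\in\mathbf{LT}$, if there are nonempty strings $q^i_n$ ($n<\omega$, $i=0,1$) with $\mathrm{lh}(q^0_n)=\mathrm{lh}(q^1_n)\ge1$ and $q^i_n(0)=i$, such that $T$ consists exactly of all initial segments of strings $r^\frown q^{i(0)}_0{}^\frown\cdots{}^\frown q^{i(n)}_n$, where $r=\mathrm{stem}(T)$, $n<\omega$, $i(0),\dots,i(n)\in\{0,1\}$. A large-tree forcing notion (LTF) is a set $\mathbb P\subseteq\mathbf{LT}$ such that $T\upharpoonright u\in\mathbb P$ whenever $u\in T\in\mathbb P$, and $s\cdot T\in\mathbb P$ whenever $T\in\mathbb P$ and $s\in 2^{<\omega}$. The conditional product $\mathbb P\times_{E_0}\mathbb P$ is the set of pairs $\langle T,T'\rangle$ of trees $T,T'\in\mathbb P$ such that $T'=s\cdot T$ for some $s\in 2^{<\omega}$, ordered componentwise by inclusion (smaller is stronger). $E_0$ is the equivalence relation on $2^\omega$: $x\,E_0\,y$ iff $x(n)=y(n)$ for all but finitely many $n$, equivalently $y=\sigma\cdot x$ for some $\sigma\in 2^{<\omega}$. *)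

theory Defs
  imports Main "HOL-Library.Sublist"
begin

text \<open>Binary strings are bool lists (False = 0, True = 1); reals in 2^omega are nat => bool.
Addition mod 2 on bool is inequality.\<close>

definition smul_real :: "bool list \<Rightarrow> (nat \<Rightarrow> bool) \<Rightarrow> (nat \<Rightarrow> bool)" where
  "smul_real s x = (\<lambda>k. if k < length s then x k \<noteq> s ! k else x k)"

definition smul_str :: "bool list \<Rightarrow> bool list \<Rightarrow> bool list" where
  "smul_str s t = map (\<lambda>k. if k < length s then t ! k \<noteq> s ! k else t ! k) [0..<length t]"

definition smul_tree :: "bool list \<Rightarrow> bool list set \<Rightarrow> bool list set" where
  "smul_tree s T = smul_str s ` T"

definition restr :: "bool list set \<Rightarrow> bool list \<Rightarrow> bool list set" where
  "restr T u = {t \<in> T. prefix u t \<or> prefix t u}"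

definition is_tree :: "bool list set \<Rightarrow> bool" where
  "is_tree T \<longleftrightarrow> T \<noteq> {} \<and> (\<forall>t\<in>T. \<forall>u. prefix u t \<longrightarrow> u \<in> T)"

definition perfect_tree :: "bool list set \<Rightarrow> bool" where
  "perfect_tree T \<longleftrightarrow> is_tree T
     \<and> (\<forall>t\<in>T. \<exists>b. t @ [b] \<in> T)
     \<and> (\<forall>t\<in>T. \<exists>u\<in>T. prefix t u \<and> u @ [False] \<in> T \<and> u @ [True] \<in> T)"

definition is_stem :: "bool list set \<Rightarrow> bool list \<Rightarrow> bool" where
  "is_stem T r \<longleftrightarrow> r \<in> T \<and> restr T r = T \<and> (\<forall>s\<in>T. restr T s = T \<longrightarrow> length s \<le> length r)"

definition stem :: "bool list set \<Rightarrow> bool list" where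
  "stem T = (THE r. is_stem T r)"

definition body :: "bool list set \<Rightarrow> (nat \<Rightarrow> bool) set" where
  "body T = {a. \<forall>m. map a [0..<m] \<in> T}"

text \<open>Large trees: q n i is the string q^i_n.\<close>
definition LT :: "bool list set \<Rightarrow> bool" where
  "LT T \<longleftrightarrow> perfect_tree T \<and>
    (\<exists>q :: nat \<Rightarrow> bool \<Rightarrow> bool list.
       (\<forall>n. length (q n False) = length (q n True) \<and> length (q n True) \<ge> 1) \<and>
       (\<forall>n i. q n i ! 0 = i) \<and>
       T = {t. \<exists>(n::nat) (i::nat \<Rightarrow> bool).
                 prefix t (stem T @ concat (map (\<lambda>k. q k (i k)) [0..<Suc n]))})"

definition LTF :: "bool list set set \<Rightarrow> bool" where
  "LTF P \<longleftrightarrow> (\<forall>T\<in>P. LT T)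
     \<and> (\<forall>T\<in>P. \<forall>u\<in>T. restr T u \<in> P)
     \<and> (\<forall>T\<in>P. \<forall>s. smul_tree s T \<in> P)"

definition cprod :: "bool list set set \<Rightarrow> (bool list set \<times> bool list set) set" where
  "cprod P = {(T, T'). T \<in> P \<and> T' \<in> P \<and> (\<exists>s. T' = smul_tree s T)}"

end

theory Submission
  imports Defs
begin
lemma len_smul[simp]: "length (smul_str s t) = length t"
  by (simp add: smul_str_def)

lemma nth_smul[simp]: "k < length t \<Longrightarrow> smul_str s t ! k = (if k < length s then t ! k \<noteq> s ! k else t ! k)"
  by (simp add: smul_str_def)

lemma smul_invol[simp]: "smul_str s (smul_str s t) = t"
  by (rule nth_equalityI) auto

lemma smul_prefix: "prefix a b \<Longrightarrow> prefix (smul_str s a) (smul_str s b)"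
proof -
  assume "prefix a b"
  then obtain zs where b: "b = a @ zs" by (auto simp: prefix_def)
  have "smul_str s a = take (length a) (smul_str s b)"
    unfolding b by (rule nth_equalityI) (auto simp: nth_append)
  then show ?thesis by (metis take_is_prefix)
qed

lemma map_smul_real: "map (smul_real \<sigma> x) [0..<n] = smul_str \<sigma> (map x [0..<n])"
  by (rule nth_equalityI) (auto simp: smul_real_def)

definition xorl :: "bool list \<Rightarrow> bool list \<Rightarrow> bool list" where
  "xorl s w = map (\<lambda>k. (k < length s \<and> s ! k) \<noteq> (k < length w \<and> w ! k)) [0..<max (length s) (length w)]"

lemma smul_comp: "smul_str s (smul_str w t) = smul_str (xorl s w) t"
  by (rule nth_equalityI) (auto simp: xorl_def)

lemma smul_tree_comp: "smul_tree s (smul_tree w T) = smul_tree (xorl s w) T"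
  by (auto simp: smul_tree_def smul_comp image_image)

lemma swap_block:
  assumes "length a = length b"
  shows "smul_str (replicate (length r) False @ map2 (\<noteq>) a b) (r @ a @ rest) = r @ b @ rest"
  using assms by (intro nth_equalityI) (auto simp: nth_append)

lemma swap_block':
  assumes "length a = length b"
  shows "smul_str (replicate (length r) False @ map2 (\<noteq>) a b) (r @ b @ rest) = r @ a @ rest"
  using assms by (intro nth_equalityI) (auto simp: nth_append)

lemma restr_len: "t \<in> restr T u \<Longrightarrow> length t = length u \<Longrightarrow> t = u"
  unfolding restr_def by (metis (mono_tags, lifting) mem_Collect_eq prefix_length_le prefix_length_less strict_prefixI' le_neq_implies_less order_less_irrefl prefix_order.dual_order.strict_iff_order)


lemma body_disj:
  assumes "\<And>t. t \<in> S \<Longrightarrow> length t = length u \<Longrightarrow> t = u"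
    and "\<And>t. t \<in> S' \<Longrightarrow> length t = length u \<Longrightarrow> t = v"
    and "smul_str \<sigma> u \<noteq> v"
  shows "\<forall>x \<in> body S. smul_real \<sigma> x \<notin> body S'"
proof (intro ballI notI)
  fix x assume x: "x \<in> body S" and y: "smul_real \<sigma> x \<in> body S'"
  have "map x [0..<length u] = u" using x assms(1) by (auto simp: body_def)
  moreover have "map (smul_real \<sigma> x) [0..<length u] = v" using y assms(2) by (auto simp: body_def)
  ultimately show False using assms(3) by (simp add: map_smul_real)
qed

lemma concat_split: "concat (map f [0..<Suc n]) = f 0 @ concat (map f [1..<Suc n])"
  by (simp del: upt_Suc add: upt_conv_Cons)

theorem corollary5p4:
  assumes "LTF P"
  shows "\<forall>\<sigma>. \<forall>(T, T') \<in> cprod P. \<exists>(S, S') \<in> cprod P.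
           S \<subseteq> T \<and> S' \<subseteq> T' \<and> (\<forall>x \<in> body S. smul_real \<sigma> x \<notin> body S')"
proof (intro allI ballI, clarify)
  fix \<sigma> T T'
  assume "(T, T') \<in> cprod P"
  then obtain s where TP: "T \<in> P" and T'P: "T' \<in> P" and T': "T' = smul_tree s T"
    by (auto simp: cprod_def)
  have LTT: "LT T" using assms TP by (auto simp: LTF_def)
  define r where "r = stem T"
  from LTT obtain q :: "nat \<Rightarrow> bool \<Rightarrow> bool list" where
    ql: "\<And>n. length (q n False) = length (q n True) \<and> length (q n True) \<ge> 1"
    and q0: "\<And>n i. q n i ! 0 = i"
    and Teq: "T = {t. \<exists>(n::nat) (i::nat \<Rightarrow> bool).
                 prefix t (r @ concat (map (\<lambda>k. q k (i k)) [0..<Suc n]))}"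
    unfolding LT_def r_def by blast
  define u where "u = r @ q 0 False"
  define u2 where "u2 = r @ q 0 True"
  have uT: "u \<in> T" unfolding Teq u_def
    by (rule CollectI, rule exI[of _ 0], rule exI[of _ "\<lambda>_. False"]) simp
  have u2T: "u2 \<in> T" unfolding Teq u2_def
    by (rule CollectI, rule exI[of _ 0], rule exI[of _ "\<lambda>_. True"]) simp
  define S where "S = restr T u"
  have SP: "S \<in> P" using assms TP uT by (auto simp: LTF_def S_def)
  have ST: "S \<subseteq> T" by (auto simp: S_def restr_def)
  have Slen: "\<And>t. t \<in> S \<Longrightarrow> length t = length u \<Longrightarrow> t = u"
    using restr_len S_def by blast
  define w where "w = replicate (length r) False @ map2 (\<noteq>) (q 0 False) (q 0 True)"
  have lq: "length (q 0 False) = length (q 0 True)" using ql by blast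
  have wu: "smul_str w u = u2" unfolding w_def u_def u2_def
    using swap_block[OF lq, of r "[]"] by simp
  have wT: "smul_str w t \<in> T" if "t \<in> T" for t
  proof -
    from that obtain n i where p: "prefix t (r @ concat (map (\<lambda>k. q k (i k)) [0..<Suc n]))"
      unfolding Teq by blast
    define rest where "rest = concat (map (\<lambda>k. q k (i k)) [1..<Suc n])"
    define i' where "i' = i(0 := \<not> i 0)"
    have rest': "concat (map (\<lambda>k. q k (i' k)) [1..<Suc n]) = rest"
      unfolding rest_def i'_def by (intro arg_cong[where f=concat] map_cong) auto
    have big: "r @ concat (map (\<lambda>k. q k (i k)) [0..<Suc n]) = r @ q 0 (i 0) @ rest"
      unfolding rest_def concat_split[of "\<lambda>k. q k (i k)" n] by simp
    have big': "r @ concat (map (\<lambda>k. q k (i' k)) [0..<Suc n]) = r @ q 0 (\<not> i 0) @ rest"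
      unfolding concat_split[of "\<lambda>k. q k (i' k)" n] rest' by (simp add: i'_def)
    have "smul_str w (r @ q 0 (i 0) @ rest) = r @ q 0 (\<not> i 0) @ rest"
      unfolding w_def using swap_block[OF lq] swap_block'[OF lq] by (cases "i 0") auto
    then have "prefix (smul_str w t) (r @ concat (map (\<lambda>k. q k (i' k)) [0..<Suc n]))"
      using smul_prefix[OF p, of w] big big' by simp
    then show ?thesis unfolding Teq by blast
  qed
  have uu2: "u \<noteq> u2"
  proof
    assume "u = u2"
    then have "q 0 False = q 0 True" by (simp add: u_def u2_def)
    then show False using q0[of 0 False] q0[of 0 True] by simp
  qed
  show "\<exists>(S, S') \<in> cprod P. S \<subseteq> T \<and> S' \<subseteq> T' \<and> (\<forall>x \<in> body S. smul_real \<sigma> x \<notin> body S')"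
  proof (cases "smul_str \<sigma> u = smul_str s u")
    case False
    define S' where "S' = smul_tree s S"
    have "(S, S') \<in> cprod P" using SP assms by (auto simp: cprod_def S'_def LTF_def)
    moreover have "S' \<subseteq> T'" using ST by (auto simp: S'_def T' smul_tree_def)
    moreover have "\<forall>x \<in> body S. smul_real \<sigma> x \<notin> body S'"
    proof (rule body_disj[OF Slen, of _ _ "smul_str s u"])
      fix t assume "t \<in> S'" "length t = length u"
      then obtain t0 where t0: "t0 \<in> S" "t = smul_str s t0"
        by (auto simp: S'_def smul_tree_def)
      then have "length t0 = length u" using \<open>length t = length u\<close> by simp
      then have "t0 = u" using Slen t0(1) by blast
      then show "t = smul_str s u" using t0(2) by simp
    qed (use False in auto)
    ultimately show ?thesis using ST by blast
  next
    case True
    define S' where "S' = smul_tree (xorl s w) S"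
    have S'eq: "S' = smul_tree s (smul_tree w S)" by (simp add: S'_def smul_tree_comp)
    have "(S, S') \<in> cprod P" using SP assms by (auto simp: cprod_def S'_def LTF_def)
    moreover have "S' \<subseteq> T'" using ST wT by (auto simp: S'eq T' smul_tree_def)
    moreover have "\<forall>x \<in> body S. smul_real \<sigma> x \<notin> body S'"
    proof (rule body_disj[OF Slen, of _ _ "smul_str s u2"])
      fix t assume "t \<in> S'" "length t = length u"
      then obtain t0 where t0: "t0 \<in> S" "t = smul_str s (smul_str w t0)"
        by (auto simp: S'eq smul_tree_def)
      then have "length t0 = length u" using \<open>length t = length u\<close> by simp
      then have "t0 = u" using Slen t0(1) by blast
      then show "t = smul_str s u2" using t0(2) wu by simp
    next
      show "smul_str \<sigma> u \<noteq> smul_str s u2"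
        using True uu2 by (metis smul_invol)
    qed
    ultimately show ?thesis using ST by blast
  qed
qed

end
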